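(* Let $d \geq 48$ be an integer, $L = U \oplus U \oplus \langle -6 \rangle \oplus \langle -2d \rangle$, let $w$ and $v$ be generators of the summands $\langle -6\rangle$ and $\langle -2d\rangle$, $v^* = \frac{1}{2d}v$, $w^* = \frac{1}{6}w$, and $$\Gamma = \{ g \in \operatorname{O}^+(L) \mid g v^* \equiv v^* \bmod L \text{ and } g w^* \equiv \det(g)\, w^* \bmod L\}.$$ Then $|\operatorname{O}(L) : \Gamma| \leq 2880 \cdot 2^{\nu(2d)}$, where $\nu(n)$ denotes the number of distinct prime divisors of $n$.
   Context: $U$ is the hyperbolic plane, $\langle m\rangle$ the rank one lattice generated by a vector of square $m$. $\operatorname{O}^+(L) = \operatorname{O}(L) \cap \operatorname{O}^+(L\otimes \mathbb{R})$, where $\operatorname{O}^+(L\otimes\mathbb{R})$ is the kernel of the real spinor norm. $v^*,w^*$ lie in the dual lattice $L^\vee$. *)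

theory Defs
  imports "HOL-Analysis.Analysis" "HOL-Library.Numeral_Type" "HOL-Computational_Algebra.Primes"
begin

text \<open>The lattice L = U + U + <-6> + <-2d> is realised as Z^6 inside R^6 (type real^6).
  Coordinates (indices of type 6): 1,2 span the first U (e1,f1), 3,4 the second U (e2,f2),
  5 is w with w.w = -6, and 0 (= 6 in the numeral type) is v with v.v = -2d.\<close>

definition gramL :: "nat \<Rightarrow> real^6^6" where
  "gramL d = (\<chi> i j.
     if (i = 1 \<and> j = 2) \<or> (i = 2 \<and> j = 1) \<or> (i = 3 \<and> j = 4) \<or> (i = 4 \<and> j = 3) then 1
     else if i = 5 \<and> j = 5 then -6
     else if i = 0 \<and> j = 0 then - (2 * real d)
     else 0)"

definition bilL :: "nat \<Rightarrow> real^6 \<Rightarrow> real^6 \<Rightarrow> real" where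
  "bilL d x y = x \<bullet> (gramL d *v y)"

definition vecL :: "real^6" where "vecL = axis 0 1"   \<comment> \<open>generator v of <-2d>\<close>
definition vecW :: "real^6" where "vecW = axis 5 1"   \<comment> \<open>generator w of <-6>\<close>

definition int_vec :: "real^6 \<Rightarrow> bool" where
  "int_vec x \<longleftrightarrow> (\<forall>i. x $ i \<in> \<int>)"

definition int_mat :: "real^6^6 \<Rightarrow> bool" where
  "int_mat M \<longleftrightarrow> (\<forall>i j. M $ i $ j \<in> \<int>)"

text \<open>O(L): automorphisms of the lattice Z^6 (integral matrices with integral inverse)
  preserving the bilinear form.\<close>
definition OL :: "nat \<Rightarrow> (real^6^6) set" where
  "OL d = {g. int_mat g \<and> (\<exists>h. int_mat h \<and> g ** h = mat 1 \<and> h ** g = mat 1)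
              \<and> (\<forall>x y. bilL d (g *v x) (g *v y) = bilL d x y)}"

text \<open>Reflection of the real quadratic space L (x) R in a non-isotropic vector r.\<close>
definition reflL :: "nat \<Rightarrow> real^6 \<Rightarrow> real^6 \<Rightarrow> real^6" where
  "reflL d r x = x - (2 * bilL d x r / bilL d r r) *\<^sub>R r"

text \<open>Kernel of the real spinor norm on O(L (x) R), with the convention that the spinor norm
  of the reflection in r is -(r,r)/2 mod squares: g lies in the kernel iff it is a product of
  reflections in non-isotropic real vectors of which an even number have positive square.
  (For signature (2,4) this is the subgroup preserving the Hermitian symmetric domain.)\<close>
definition spinor_kernel :: "nat \<Rightarrow> (real^6^6) set" where
  "spinor_kernel d = {g. \<exists>rs. (\<forall>r\<in>set rs. bilL d r r \<noteq> 0)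
        \<and> ((*v) g) = foldr (\<circ>) (map (reflL d) rs) id
        \<and> even (length (filter (\<lambda>r. bilL d r r > 0) rs))}"

definition OplusL :: "nat \<Rightarrow> (real^6^6) set" where
  "OplusL d = OL d \<inter> spinor_kernel d"

definition GammaL :: "nat \<Rightarrow> (real^6^6) set" where
  "GammaL d = {g \<in> OplusL d.
      int_vec (g *v ((1 / (2 * real d)) *\<^sub>R vecL) - (1 / (2 * real d)) *\<^sub>R vecL)
    \<and> int_vec (g *v ((1 / 6) *\<^sub>R vecW) - (det g) *\<^sub>R ((1 / 6) *\<^sub>R vecW))}"

text \<open>Left cosets of H in G, for sets of matrices.\<close>
definition mat_cosets :: "(real^6^6) set \<Rightarrow> (real^6^6) set \<Rightarrow> (real^6^6) set set" where
  "mat_cosets G H = {(\<lambda>h. g ** h) ` H | g. g \<in> G}"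

end

theory Submission
  imports Defs
begin



lemma exhaust_6:
  fixes x :: 6
  shows "x = 0 \<or> x = 1 \<or> x = 2 \<or> x = 3 \<or> x = 4 \<or> x = 5"
proof (induct x)
  case (of_int z)
  then have "z = 0 \<or> z = 1 \<or> z = 2 \<or> z = 3 \<or> z = 4 \<or> z = 5" by fastforce
  then show ?case by auto
qed

lemma forall_6: "(\<forall>i::6. P i) \<longleftrightarrow> P 0 \<and> P 1 \<and> P 2 \<and> P 3 \<and> P 4 \<and> P 5"
  by (metis exhaust_6)

lemma UNIV_6: "UNIV = {0, 1, 2, 3, 4, 5::6}"
  using exhaust_6 by auto

lemma sum_6: "sum f (UNIV::6 set) = f 0 + f 1 + f 2 + f 3 + f 4 + f 5"
  unfolding UNIV_6 by (simp add: ac_simps)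

lemma vec6_eq_iff: "(x::real^6) = y \<longleftrightarrow> x$0 = y$0 \<and> x$1 = y$1 \<and> x$2 = y$2 \<and> x$3 = y$3 \<and> x$4 = y$4 \<and> x$5 = y$5"
  by (simp add: vec_eq_iff forall_6)

lemma axis6: "axis (i::6) (1::real) $ j = (if j = i then 1 else 0)"
  by (simp add: axis_def)

lemma bilL_eq: "bilL d x y = x$1 * y$2 + x$2 * y$1 + x$3 * y$4 + x$4 * y$3 - 6 * x$5 * y$5
   - 2 * real d * x$0 * y$0"
  unfolding bilL_def gramL_def inner_vec_def matrix_vector_mult_def
  by (simp add: sum_6 algebra_simps)

lemma bilL_sym: "bilL d x y = bilL d y x"
  by (simp add: bilL_eq algebra_simps)

lemma bilL_add_left: "bilL d (x + z) y = bilL d x y + bilL d z y"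
  by (simp add: bilL_eq algebra_simps)
lemma bilL_add_right: "bilL d y (x + z) = bilL d y x + bilL d y z"
  by (simp add: bilL_eq algebra_simps)
lemma bilL_diff_left: "bilL d (x - z) y = bilL d x y - bilL d z y"
  by (simp add: bilL_eq algebra_simps)
lemma bilL_diff_right: "bilL d y (x - z) = bilL d y x - bilL d y z"
  by (simp add: bilL_eq algebra_simps)
lemma bilL_scale_left: "bilL d (c *\<^sub>R x) y = c * bilL d x y"
  by (simp add: bilL_eq algebra_simps)
lemma bilL_scale_right: "bilL d y (c *\<^sub>R x) = c * bilL d y x"
  by (simp add: bilL_eq algebra_simps)
lemma bilL_neg_left: "bilL d (- x) y = - bilL d x y"
  by (simp add: bilL_eq algebra_simps)
lemma bilL_neg_right: "bilL d y (- x) = - bilL d y x"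
  by (simp add: bilL_eq algebra_simps)

lemmas bilL_lin = bilL_add_left bilL_add_right bilL_diff_left bilL_diff_right
  bilL_scale_left bilL_scale_right bilL_neg_left bilL_neg_right

definition isoL :: "nat \<Rightarrow> (real^6 \<Rightarrow> real^6) \<Rightarrow> bool" where
  "isoL d f \<longleftrightarrow> (\<forall>x y. f (x + y) = f x + f y) \<and> (\<forall>c x. f (c *\<^sub>R x) = c *\<^sub>R f x)
     \<and> (\<forall>x y. bilL d (f x) (f y) = bilL d x y)"

lemma isoL_comp: "isoL d f \<Longrightarrow> isoL d g \<Longrightarrow> isoL d (f \<circ> g)"
  by (simp add: isoL_def)

lemma isoL_id: "isoL d id"
  by (simp add: isoL_def)

lemma reflL_add: "reflL d r (x + y) = reflL d r x + reflL d r y"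
proof -
  have e: "2 * bilL d (x+y) r / bilL d r r = 2*bilL d x r/bilL d r r + 2*bilL d y r / bilL d r r"
    by (simp only: bilL_add_left add_divide_distrib distrib_left)
  show ?thesis unfolding reflL_def e scaleR_add_left by (simp only: diff_add_eq add_diff_eq diff_diff_eq add_ac)
qed

lemma reflL_scale: "reflL d r (c *\<^sub>R x) = c *\<^sub>R reflL d r x"
proof -
  have e: "2 * bilL d (c *\<^sub>R x) r / bilL d r r = c * (2*bilL d x r/bilL d r r)"
    by (simp add: bilL_scale_left)
  show ?thesis unfolding reflL_def e by (simp only: scaleR_diff_right scaleR_scaleR)
qed

lemma bil_expand: "bilL d (x - A *\<^sub>R r) (y - B *\<^sub>R r) = bilL d x y - B * bilL d x r - A * bilL d r y + A*(B*bilL d r r)"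
  by (simp only: bilL_diff_left bilL_diff_right bilL_scale_left bilL_scale_right) (simp add: algebra_simps)

lemma reflL_bil:
  assumes "bilL d r r \<noteq> 0"
  shows "bilL d (reflL d r x) (reflL d r y) = bilL d x y"
proof -
  define a where "a = bilL d x r"
  define b where "b = bilL d y r"
  define q where "q = bilL d r r"
  have s: "bilL d r x = a" "bilL d r y = b" unfolding a_def b_def by (rule bilL_sym)+
  have "bilL d (reflL d r x) (reflL d r y) = bilL d x y - (2*b/q) * a - (2*a/q) * b + (2*a/q)*((2*b/q)*q)"
    unfolding reflL_def bil_expand a_def[symmetric] b_def[symmetric] q_def[symmetric] s by simp
  also have "\<dots> = bilL d x y"
  proof -
    have q: "q \<noteq> 0" using assms unfolding q_def .
    have h: "(2*b/q)*q = 2*b" using q by simp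
    have e: "(2*b/q) * a = 2*(a*b/q)" "(2*a/q) * b = 2*(a*b/q)" "(2*a/q)*(2*b) = 4*(a*b/q)" by auto
    show ?thesis unfolding h e by simp
  qed
  finally show ?thesis .
qed

lemma reflL_iso:
  assumes "bilL d r r \<noteq> 0"
  shows "isoL d (reflL d r)"
  using assms by (simp add: isoL_def reflL_add reflL_scale reflL_bil)

lemma reflL_invol:
  assumes "bilL d r r \<noteq> 0"
  shows "reflL d r (reflL d r x) = x"
proof -
  define A where "A = 2 * bilL d x r / bilL d r r"
  have "bilL d (x - A *\<^sub>R r) r = bilL d x r - A * bilL d r r"
    by (simp only: bilL_diff_left bilL_scale_left)
  also have "\<dots> = - bilL d x r" using assms unfolding A_def by simp
  finally have e: "2 * bilL d (x - A *\<^sub>R r) r / bilL d r r = - A" unfolding A_def by simp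
  show ?thesis unfolding reflL_def A_def[symmetric] e by simp
qed

definition Rf :: "nat \<Rightarrow> (real^6) list \<Rightarrow> real^6 \<Rightarrow> real^6" where
  "Rf d rs = foldr (\<circ>) (map (reflL d) rs) id"

definition goodL :: "nat \<Rightarrow> (real^6) list \<Rightarrow> bool" where
  "goodL d rs \<longleftrightarrow> (\<forall>r\<in>set rs. bilL d r r \<noteq> 0)"

lemma Rf_Nil[simp]: "Rf d [] = id" by (simp add: Rf_def)
lemma Rf_Cons[simp]: "Rf d (r # rs) = reflL d r \<circ> Rf d rs" by (simp add: Rf_def)
lemma Rf_append: "Rf d (rs @ ss) = Rf d rs \<circ> Rf d ss"
  by (induct rs) auto

lemma Rf_iso: "goodL d rs \<Longrightarrow> isoL d (Rf d rs)"
  by (induct rs) (simp_all add: goodL_def isoL_id isoL_comp reflL_iso)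

lemma Rf_rev: "goodL d rs \<Longrightarrow> Rf d (rev rs) (Rf d rs x) = x"
proof (induct rs arbitrary: x)
  case Nil then show ?case by simp
next
  case (Cons r rs)
  then have g: "goodL d rs" "bilL d r r \<noteq> 0" by (auto simp: goodL_def)
  have "Rf d (rev (r # rs)) (Rf d (r # rs) x) = Rf d (rev rs) (reflL d r (reflL d r (Rf d rs x)))"
    by (simp add: Rf_append)
  also have "\<dots> = x" using g Cons(1) reflL_invol[OF g(2)] by simp
  finally show ?case .
qed




lemma reflL_orth: "bilL d z r = 0 \<Longrightarrow> reflL d r z = z"
  by (simp add: reflL_def)

lemma reflL_half: "2 * bilL d z r = bilL d r r \<Longrightarrow> bilL d r r \<noteq> 0 \<Longrightarrow> reflL d r z = z - r"
  by (simp add: reflL_def)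

lemma cd_step:
  assumes f: "isoL d f" and x: "bilL d x x \<noteq> 0"
    and S: "\<forall>s\<in>S. f s = s \<and> bilL d s x = 0"
  shows "\<exists>rs. goodL d rs \<and> (\<forall>s\<in>insert x S. Rf d rs (f s) = s)"
proof -
  define y where "y = f x"
  have Qy: "bilL d y y = bilL d x x" using f unfolding y_def isoL_def by simp
  have Sy: "bilL d s y = 0" if "s \<in> S" for s
  proof -
    have "bilL d s y = bilL d (f s) (f x)" using S that unfolding y_def by simp
    also have "\<dots> = bilL d s x" using f unfolding isoL_def by simp
    finally show ?thesis using S that by simp
  qed
  have Sx: "bilL d s x = 0" if "s \<in> S" for s using S that by simp
  have sym1: "bilL d x y = bilL d y x" by (rule bilL_sym)
  show ?thesis
  proof (cases "bilL d (y - x) (y - x) = 0")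
    case False
    define r where "r = y - x"
    have h: "2 * bilL d y r = bilL d r r" unfolding r_def using Qy sym1
      by (simp add: bilL_lin)
    have "Rf d [r] (f x) = x" using reflL_half[OF h False[folded r_def]] unfolding y_def[symmetric] r_def
      by simp
    moreover have "Rf d [r] (f s) = s" if "s \<in> S" for s
    proof -
      have "bilL d s r = 0" unfolding r_def using Sy[OF that] Sx[OF that] by (simp add: bilL_lin)
      then show ?thesis using S that by (simp add: reflL_orth)
    qed
    moreover have "goodL d [r]" using False unfolding r_def goodL_def by simp
    ultimately show ?thesis by blast
  next
    case True
    define r where "r = y + x"
    have Qr: "bilL d r r \<noteq> 0"
    proof -
      have "bilL d r r + bilL d (y - x) (y - x) = 4 * bilL d x x" unfolding r_def using Qy sym1
        by (simp add: bilL_lin)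
      then show ?thesis using True x by simp
    qed
    have h: "2 * bilL d y r = bilL d r r" unfolding r_def using Qy sym1
      by (simp add: bilL_lin)
    have e1: "reflL d r y = - x" using reflL_half[OF h Qr] unfolding r_def by simp
    have h2: "2 * bilL d (- x) (- x) = bilL d (- x) (- x) + bilL d (- x) (- x)" by simp
    have "2 * bilL d (- x) x / bilL d x x = -2" using x by (simp add: bilL_neg_left)
    then have e2: "reflL d x (- x) = x" unfolding reflL_def by (simp add: scaleR_2)
    have "Rf d [x, r] (f x) = x" unfolding y_def[symmetric] using e1 e2 by simp
    moreover have "Rf d [x, r] (f s) = s" if "s \<in> S" for s
    proof -
      have "bilL d s r = 0" unfolding r_def using Sy[OF that] Sx[OF that] by (simp add: bilL_lin)
      then show ?thesis using S that Sx[OF that] by (simp add: reflL_orth)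
    qed
    moreover have "goodL d [x, r]" using Qr x unfolding goodL_def by simp
    ultimately show ?thesis by blast
  qed
qed

lemma goodL_append: "goodL d (rs @ ss) \<longleftrightarrow> goodL d rs \<and> goodL d ss"
  by (auto simp: goodL_def)

lemma goodL_rev: "goodL d (rev rs) \<longleftrightarrow> goodL d rs"
  by (auto simp: goodL_def)

lemma cd_iter:
  assumes f: "isoL d f"
    and an: "\<forall>b\<in>set bs. bilL d b b \<noteq> 0"
    and orth: "sorted_wrt (\<lambda>a b. bilL d a b = 0) bs"
  shows "\<exists>rs. goodL d rs \<and> (\<forall>s\<in>set bs. Rf d rs (f s) = s)"
  using an orth
proof (induct bs)
  case Nil
  show ?case by (rule exI[of _ "[]"]) (simp add: goodL_def)
next
  case (Cons b bs)
  then obtain rs where rs: "goodL d rs" "\<forall>s\<in>set bs. Rf d rs (f s) = s" by auto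
  have f': "isoL d (Rf d rs \<circ> f)" using Rf_iso[OF rs(1)] f by (rule isoL_comp)
  have "\<forall>s\<in>set bs. (Rf d rs \<circ> f) s = s \<and> bilL d s b = 0"
    using rs(2) Cons(3) bilL_sym[of d _ b] by auto
  from cd_step[OF f' _ this] Cons(2) obtain rs' where
    rs': "goodL d rs'" "\<forall>s\<in>insert b (set bs). Rf d rs' ((Rf d rs \<circ> f) s) = s" by auto
  show ?case
    by (rule exI[of _ "rs' @ rs"]) (use rs rs' in \<open>auto simp: goodL_append Rf_append\<close>)
qed

definition bb1 :: "real^6" where "bb1 = axis 1 1 + axis 2 1"
definition bb2 :: "real^6" where "bb2 = axis 1 1 - axis 2 1"
definition bb3 :: "real^6" where "bb3 = axis 3 1 + axis 4 1"
definition bb4 :: "real^6" where "bb4 = axis 3 1 - axis 4 1"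
definition bb5 :: "real^6" where "bb5 = axis 5 1"
definition bb6 :: "real^6" where "bb6 = axis 0 1"

lemma bb_decomp: "x = ((x$1+x$2)/2) *\<^sub>R bb1 + ((x$1 - x$2)/2) *\<^sub>R bb2 + ((x$3+x$4)/2) *\<^sub>R bb3
   + ((x$3 - x$4)/2) *\<^sub>R bb4 + x$5 *\<^sub>R bb5 + x$0 *\<^sub>R bb6"
  unfolding vec6_eq_iff bb1_def bb2_def bb3_def bb4_def bb5_def bb6_def
  by (simp add: axis6 field_simps)

lemma bb_props:
  assumes "d > 0"
  shows "\<forall>b\<in>set [bb1,bb2,bb3,bb4,bb5,bb6]. bilL d b b \<noteq> 0"
    "sorted_wrt (\<lambda>a b. bilL d a b = 0) [bb1,bb2,bb3,bb4,bb5,bb6]"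
  using assms unfolding bb1_def bb2_def bb3_def bb4_def bb5_def bb6_def
  by (simp_all add: bilL_eq axis6)

lemma iso_decomp:
  assumes f: "isoL d f" and d: "d > 0"
  shows "\<exists>rs. goodL d rs \<and> f = Rf d rs"
proof -
  obtain rs where rs: "goodL d rs" "\<forall>s\<in>set [bb1,bb2,bb3,bb4,bb5,bb6]. Rf d rs (f s) = s"
    using cd_iter[OF f bb_props[OF d]] by blast
  define p where "p = Rf d rs \<circ> f"
  have p: "isoL d p" unfolding p_def using Rf_iso[OF rs(1)] f by (rule isoL_comp)
  have pb: "p bb1 = bb1" "p bb2 = bb2" "p bb3 = bb3" "p bb4 = bb4" "p bb5 = bb5" "p bb6 = bb6"
    using rs(2) unfolding p_def by auto
  have pid: "p x = x" for x
  proof -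
    have "p x = p (((x$1+x$2)/2) *\<^sub>R bb1 + ((x$1 - x$2)/2) *\<^sub>R bb2 + ((x$3+x$4)/2) *\<^sub>R bb3
   + ((x$3 - x$4)/2) *\<^sub>R bb4 + x$5 *\<^sub>R bb5 + x$0 *\<^sub>R bb6)" using bb_decomp[of x] by simp
    also have "\<dots> = ((x$1+x$2)/2) *\<^sub>R bb1 + ((x$1 - x$2)/2) *\<^sub>R bb2 + ((x$3+x$4)/2) *\<^sub>R bb3
   + ((x$3 - x$4)/2) *\<^sub>R bb4 + x$5 *\<^sub>R bb5 + x$0 *\<^sub>R bb6"
    proof -
      have add: "\<And>a b. p (a+b) = p a + p b" and sc: "\<And>c a. p (c *\<^sub>R a) = c *\<^sub>R p a"
        using p unfolding isoL_def by auto
      show ?thesis by (simp only: add sc pb)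
    qed
    also have "\<dots> = x" by (rule bb_decomp[symmetric])
    finally show ?thesis .
  qed
  have "f x = Rf d (rev rs) x" for x
  proof -
    have "f x = Rf d (rev rs) (Rf d rs (f x))" using Rf_rev[OF rs(1)] by simp
    also have "\<dots> = Rf d (rev rs) x" using pid[of x] unfolding p_def by simp
    finally show ?thesis .
  qed
  then show ?thesis using rs(1) goodL_rev by (intro exI[of _ "rev rs"]) auto
qed




lemma int_vec_add: "int_vec x \<Longrightarrow> int_vec y \<Longrightarrow> int_vec (x + y)"
  by (simp add: int_vec_def)
lemma int_vec_diff: "int_vec x \<Longrightarrow> int_vec y \<Longrightarrow> int_vec (x - y)"
  by (simp add: int_vec_def)
lemma int_vec_scale: "c \<in> \<int> \<Longrightarrow> int_vec x \<Longrightarrow> int_vec (c *\<^sub>R x)"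
  by (simp add: int_vec_def)
lemma int_vec_mat: "int_mat A \<Longrightarrow> int_vec x \<Longrightarrow> int_vec (A *v x)"
  unfolding int_vec_def int_mat_def matrix_vector_mult_def
  by (auto intro!: Ints_sum Ints_mult)
lemma int_mat_mul: "int_mat A \<Longrightarrow> int_mat B \<Longrightarrow> int_mat (A ** B)"
  unfolding int_mat_def matrix_matrix_mult_def
  by (auto intro!: Ints_sum Ints_mult)
lemma int_mat_det: "int_mat A \<Longrightarrow> det A \<in> \<int>"
  unfolding int_mat_def det_def
  by (auto intro!: Ints_sum Ints_mult Ints_prod)

lemma matvec_comp: "(*v) (A ** B) = (*v) A \<circ> (*v) B"
  by (rule ext) (simp add: matrix_vector_mul_assoc)

lemma mat_iso: "(\<forall>x y. bilL d (g *v x) (g *v y) = bilL d x y) \<Longrightarrow> isoL d ((*v) g)"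
  unfolding isoL_def by (simp add: matrix_vector_right_distrib matrix_vector_mult_scaleR)

lemma OL_iso: "g \<in> OL d \<Longrightarrow> isoL d ((*v) g)"
  unfolding OL_def by (auto intro: mat_iso)

lemma OL_mul: assumes "g \<in> OL d" "h \<in> OL d" shows "g ** h \<in> OL d"
proof -
  obtain g' h' where g: "int_mat g" "int_mat g'" "g ** g' = mat 1" "g' ** g = mat 1"
      "\<forall>x y. bilL d (g *v x) (g *v y) = bilL d x y"
    and h: "int_mat h" "int_mat h'" "h ** h' = mat 1" "h' ** h = mat 1"
      "\<forall>x y. bilL d (h *v x) (h *v y) = bilL d x y"
    using assms unfolding OL_def by auto
  have "(g ** h) ** (h' ** g') = mat 1"
    by (metis g(3) h(3) matrix_mul_assoc matrix_mul_rid)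
  moreover have "(h' ** g') ** (g ** h) = mat 1"
    by (metis g(4) h(4) matrix_mul_assoc matrix_mul_rid)
  ultimately show ?thesis unfolding OL_def using g h
    by (auto intro!: int_mat_mul simp: matrix_vector_mul_assoc[symmetric])
qed

lemma OL_inv: assumes "g \<in> OL d"
  obtains g' where "g' \<in> OL d" "g ** g' = mat 1" "g' ** g = mat 1"
proof -
  obtain g' where g: "int_mat g" "int_mat g'" "g ** g' = mat 1" "g' ** g = mat 1"
      "\<forall>x y. bilL d (g *v x) (g *v y) = bilL d x y"
    using assms unfolding OL_def by auto
  have "bilL d (g' *v x) (g' *v y) = bilL d x y" for x y
    using g(5)[rule_format, of "g' *v x" "g' *v y"] g(3)
    by (simp add: matrix_vector_mul_assoc)
  then have "g' \<in> OL d" unfolding OL_def using g by auto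
  then show ?thesis using that g by auto
qed

lemma OL_det: assumes "g \<in> OL d" shows "det g = 1 \<or> det g = -1"
proof -
  obtain g' where g: "int_mat g" "int_mat g'" "g ** g' = mat 1"
    using assms unfolding OL_def by auto
  have "det g * det g' = 1" using g(3) by (metis det_mul det_I)
  moreover obtain a where a: "det g = of_int a" using int_mat_det[OF g(1)] by (auto elim: Ints_cases)
  moreover obtain b where b: "det g' = of_int b" using int_mat_det[OF g(2)] by (auto elim: Ints_cases)
  ultimately have "a * b = 1" by (metis of_int_eq_1_iff of_int_mult)
  then have "a = 1 \<or> a = -1" using zmult_eq_1_iff by blast
  then show ?thesis using a by auto
qed

definition parL :: "nat \<Rightarrow> (real^6) list \<Rightarrow> bool" where
  "parL d rs \<longleftrightarrow> even (length (filter (\<lambda>r. bilL d r r > 0) rs))"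

lemma spinor_kernel_alt: "spinor_kernel d = {g. \<exists>rs. goodL d rs \<and> (*v) g = Rf d rs \<and> parL d rs}"
  unfolding spinor_kernel_def goodL_def Rf_def parL_def by simp

lemma parL_append: "parL d (rs @ ss) \<longleftrightarrow> (parL d rs \<longleftrightarrow> parL d ss)"
  by (simp add: parL_def)
lemma parL_rev: "parL d (rev rs) \<longleftrightarrow> parL d rs"
  by (simp add: parL_def rev_filter[symmetric])

lemma OL_dec:
  assumes "g \<in> OL d" "d > 0"
  shows "\<exists>rs. goodL d rs \<and> (*v) g = Rf d rs \<and> (parL d rs \<longleftrightarrow> g \<in> spinor_kernel d)"
proof (cases "g \<in> spinor_kernel d")
  case True then show ?thesis unfolding spinor_kernel_alt by auto
next
  case False
  obtain rs where rs: "goodL d rs" "(*v) g = Rf d rs" using iso_decomp[OF OL_iso[OF assms(1)] assms(2)] by auto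
  then have "\<not> parL d rs" using False unfolding spinor_kernel_alt by auto
  then show ?thesis using rs False by auto
qed

lemma spin_mul: assumes "a \<in> spinor_kernel d" "b \<in> spinor_kernel d" shows "a ** b \<in> spinor_kernel d"
proof -
  obtain rs ss where "goodL d rs" "(*v) a = Rf d rs" "parL d rs" "goodL d ss" "(*v) b = Rf d ss" "parL d ss"
    using assms unfolding spinor_kernel_alt by auto
  then show ?thesis unfolding spinor_kernel_alt
    by (auto simp: matvec_comp Rf_append goodL_append parL_append intro!: exI[of _ "rs @ ss"])
qed

lemma spin_key:
  assumes g: "g \<in> OL d" and h: "h \<in> OL d" and gi: "g' ** g = mat 1" and d: "d > 0"
    and same: "g \<in> spinor_kernel d \<longleftrightarrow> h \<in> spinor_kernel d"
  shows "g' ** h \<in> spinor_kernel d"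
proof -
  obtain rs where rs: "goodL d rs" "(*v) g = Rf d rs" "parL d rs \<longleftrightarrow> g \<in> spinor_kernel d"
    using OL_dec[OF g d] by blast
  obtain ss where ss: "goodL d ss" "(*v) h = Rf d ss" "parL d ss \<longleftrightarrow> h \<in> spinor_kernel d"
    using OL_dec[OF h d] by blast
  have inv: "g' *v x = Rf d (rev rs) x" for x
  proof -
    have "g *v (Rf d (rev rs) x) = x"
      using Rf_rev[of d "rev rs" x] rs(1,2) goodL_rev by (metis comp_apply rev_rev_ident)
    then have "g' *v x = g' *v (g *v (Rf d (rev rs) x))" by simp
    also have "\<dots> = Rf d (rev rs) x" using gi by (simp add: matrix_vector_mul_assoc)
    finally show ?thesis .
  qed
  have "(*v) (g' ** h) = Rf d (rev rs @ ss)"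
    by (rule ext) (simp add: matrix_vector_mul_assoc[symmetric] inv Rf_append ss(2))
  moreover have "goodL d (rev rs @ ss)" using rs ss by (simp add: goodL_append goodL_rev)
  moreover have "parL d (rev rs @ ss)" using rs(3) ss(3) same by (simp add: parL_append parL_rev)
  ultimately show ?thesis unfolding spinor_kernel_alt by blast
qed




lemma sq_mod6:
  fixes a :: int
  shows "12 dvd (a^2 - (a mod 6)^2)"
proof -
  obtain q r where a: "a = 6 * q + r" and r: "r = a mod 6"
    by (metis mult_div_mod_eq)
  have "(6 * q + r)^2 - r^2 = 12 * (q * (3 * q + r))"
    by (simp add: power2_eq_square algebra_simps)
  then show ?thesis using a r by (metis dvd_triv_left)
qed

lemma range6: "0 \<le> (r::int) \<Longrightarrow> r < 6 \<Longrightarrow> r = 0 \<or> r = 1 \<or> r = 2 \<or> r = 3 \<or> r = 4 \<or> r = 5" by presburger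
lemma sq12_small: fixes r s :: int shows "12 dvd (r^2 - s^2) \<Longrightarrow> r = 0 \<or> r = 1 \<or> r = 2 \<or> r = 3 \<or> r = 4 \<or> r = 5 \<Longrightarrow>
  s = 0 \<or> s = 1 \<or> s = 2 \<or> s = 3 \<or> s = 4 \<or> s = 5 \<Longrightarrow> (r < 3) = (s < 3) \<Longrightarrow> r = s"
  by (elim disjE) simp_all

lemma sq12:
  fixes a b :: int
  assumes "12 dvd (a^2 - b^2)" "(a mod 6 < 3) = (b mod 6 < 3)"
  shows "a mod 6 = b mod 6"
proof -
  define r where "r = a mod 6"
  define s where "s = b mod 6"
  have "12 dvd (r^2 - s^2)"
  proof -
    have "r^2 - s^2 = (a^2 - b^2) - (a^2 - r^2) + (b^2 - s^2)" by simp
    moreover have "12 dvd (a^2 - b^2) - (a^2 - r^2) + (b^2 - s^2)"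
      using assms(1) sq_mod6[of a] sq_mod6[of b] unfolding r_def s_def
      by (rule dvd_add[OF dvd_diff])
    ultimately show ?thesis by simp
  qed
  moreover have "0 \<le> r" "r < 6" "0 \<le> s" "s < 6" unfolding r_def s_def by simp_all
  moreover have "(r < 3) = (s < 3)" using assms(2) unfolding r_def s_def .
  ultimately have "r = s" by (metis sq12_small range6)
  then show ?thesis unfolding r_def s_def .
qed

lemma ppow_split:
  fixes x :: int and p k :: nat
  assumes p: "prime p" and dv: "int p ^ k dvd 3 * (x^2 - 1)"
  shows "int p ^ k dvd 6 * (x - 1) \<or> int p ^ k dvd 6 * (x + 1)"
proof -
  have pi: "prime (int p)" using p by simp
  have fac: "3 * (x^2 - 1) = (x - 1) * (3 * (x + 1))" "3 * (x^2 - 1) = (x + 1) * (3 * (x - 1))"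
    by (simp_all add: power2_eq_square algebra_simps)
  show ?thesis
  proof (cases "int p dvd x - 1")
    case False
    then have "coprime (int p ^ k) (x - 1)"
      using pi by (simp add: prime_imp_coprime coprime_power_left_iff)
    then have "int p ^ k dvd 3 * (x + 1)" using dv fac(1) by (metis coprime_dvd_mult_right_iff)
    from dvd_mult[OF this, of 2] show ?thesis by simp
  next
    case T1: True
    show ?thesis
    proof (cases "int p dvd x + 1")
      case False
      then have "coprime (int p ^ k) (x + 1)"
        using pi by (simp add: prime_imp_coprime coprime_power_left_iff)
      then have "int p ^ k dvd 3 * (x - 1)" using dv fac(2) by (metis coprime_dvd_mult_right_iff)
      from dvd_mult[OF this, of 2] show ?thesis by simp
    next
      case T2: True
      have "int p dvd (x + 1) - (x - 1)" by (rule dvd_diff[OF T2 T1])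
      then have "int p dvd 2" by simp
      then have "p dvd 2" by (metis of_nat_numeral int_dvd_int_iff)
      then have p2: "p = 2" using p primes_dvd_imp_eq two_is_prime_nat by blast
      have "(2::int) dvd x - 1" using T1 p2 by simp
      then obtain a where a: "x - 1 = 2 * a" by (elim dvdE)
      have xp1: "x + 1 = 2 * (a + 1)" using a by simp
      have cop3: "coprime ((2::int) ^ k) 3" by simp
      have "(2::int) ^ k dvd 3 * (4 * (a * (a + 1)))"
        using dv p2 a xp1 fac(1) by (simp add: algebra_simps)
      then have d4: "(2::int) ^ k dvd 4 * (a * (a + 1))"
        using cop3 coprime_dvd_mult_right_iff by blast
      show ?thesis
      proof (cases "even a")
        case True
        then have "odd (a + 1)" by simp
        then have "coprime ((2::int) ^ k) (a + 1)" by simp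
        moreover have "(2::int)^k dvd (a + 1) * (4 * a)" using d4 by (simp add: algebra_simps)
        ultimately have "(2::int)^k dvd 4 * a" using coprime_dvd_mult_right_iff by blast
        from dvd_mult[OF this, of 3] have "(2::int)^k dvd 6 * (x - 1)" using a by simp
        then show ?thesis using p2 by simp
      next
        case False
        then have "coprime ((2::int) ^ k) a" by simp
        moreover have "(2::int)^k dvd a * (4 * (a + 1))" using d4 by (simp add: algebra_simps)
        ultimately have "(2::int)^k dvd 4 * (a + 1)" using coprime_dvd_mult_right_iff by blast
        from dvd_mult[OF this, of 3] have "(2::int)^k dvd 6 * (x + 1)" using xp1 by (simp add: add.commute)
        then show ?thesis using p2 by simp
      qed
    qed
  qed
qed

lemma dvd_from_ppows:
  fixes n :: nat and z :: int
  assumes n: "n > 0" and h: "\<forall>p\<in>prime_factors n. int p ^ multiplicity p n dvd z"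
  shows "int n dvd z"
proof (cases "z = 0")
  case True then show ?thesis by simp
next
  case False
  define m where "m = nat \<bar>z\<bar>"
  have m0: "m \<noteq> 0" using False unfolding m_def by simp
  have "n dvd m"
  proof (rule multiplicity_le_imp_dvd)
    show "n \<noteq> 0" using n by simp
  next
    fix p :: nat assume p: "prime p"
    show "multiplicity p n \<le> multiplicity p m"
    proof (cases "p \<in> prime_factors n")
      case True
      then have "int p ^ multiplicity p n dvd z" using h by auto
      then have "p ^ multiplicity p n dvd m" unfolding m_def
        by (metis dvd_nat_abs_iff of_nat_power)
      then show ?thesis using m0 p by (intro multiplicity_geI) auto
    next
      case False
      then have "multiplicity p n = 0" using p by (auto simp: prime_factors_multiplicity)
      then show ?thesis by simp
    qed
  qed
  then show ?thesis unfolding m_def by (simp add: dvd_nat_abs_iff)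
qed

definition Sset :: "nat \<Rightarrow> int \<Rightarrow> nat set" where
  "Sset n x = {p \<in> prime_factors n. int p ^ multiplicity p n dvd 6 * (x - 1)}"

lemma Sset_sub: "Sset n x \<subseteq> prime_factors n" by (auto simp: Sset_def)

lemma roots_S:
  fixes n :: nat and x y :: int
  assumes n: "n > 0" and x: "int n dvd 3 * (x^2 - 1)" and y: "int n dvd 3 * (y^2 - 1)"
    and S: "Sset n x = Sset n y"
  shows "int n dvd 6 * (x - y)"
proof (rule dvd_from_ppows[OF n], intro ballI)
  fix p assume pf: "p \<in> prime_factors n"
  then have p: "prime p" by auto
  define P where "P = int p ^ multiplicity p n"
  have Pn: "P dvd int n" unfolding P_def by (metis multiplicity_dvd of_nat_dvd_iff of_nat_power)
  have Px: "P dvd 6 * (x - 1) \<or> P dvd 6 * (x + 1)"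
    unfolding P_def using ppow_split[OF p] dvd_trans[OF Pn x] P_def by blast
  have Py: "P dvd 6 * (y - 1) \<or> P dvd 6 * (y + 1)"
    unfolding P_def using ppow_split[OF p] dvd_trans[OF Pn y] P_def by blast
  have eq: "P dvd 6 * (x - 1) \<longleftrightarrow> P dvd 6 * (y - 1)"
    using S pf unfolding Sset_def P_def by blast
  have e1: "6 * (x - y) = 6 * (x - 1) - 6 * (y - 1)" "6 * (x - y) = 6 * (x + 1) - 6 * (y + 1)"
    by (simp_all add: algebra_simps)
  show "int p ^ multiplicity p n dvd 6 * (x - y)"
    unfolding P_def[symmetric]
    using Px Py eq e1 by (metis dvd_diff)
qed




definition ent :: "real^6^6 \<Rightarrow> 6 \<Rightarrow> 6 \<Rightarrow> int" where
  "ent g i j = \<lfloor>g $ i $ j\<rfloor>"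

lemma ent_eq: "int_mat g \<Longrightarrow> g $ i $ j = of_int (ent g i j)"
  unfolding ent_def int_mat_def by (simp add: of_int_floor)

lemma mv_axis: "(A *v axis j (1::real)) $ i = A $ i $ j"
  unfolding matrix_vector_mult_def axis_def
  by (simp add: if_distrib cong: if_cong)

lemma OL_transfer:
  assumes g: "g \<in> OL d" and gi: "g ** g' = mat 1"
  shows "bilL d (g *v axis a 1) (axis b 1) = bilL d (axis a 1) (g' *v axis b 1)"
proof -
  have iso: "bilL d (g *v x) (g *v y) = bilL d x y" for x y using g unfolding OL_def by auto
  have "g *v (g' *v axis b 1) = axis b 1" using gi by (simp add: matrix_vector_mul_assoc)
  then show ?thesis using iso[of "axis a 1" "g' *v axis b 1"] by simp
qed

lemma OL_norm:
  assumes g: "g \<in> OL d"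
  shows "bilL d (g *v axis a 1) (g *v axis a 1) = bilL d (axis a 1) (axis a 1)"
  using g unfolding OL_def by auto

lemma ri: "real_of_int a = c * real_of_int b \<Longrightarrow> c = real_of_int k \<Longrightarrow> a = k * b"
  by (metis of_int_eq_iff of_int_mult)

lemma col_facts:
  assumes g: "g \<in> OL d" and gi: "g ** g' = mat 1" and g'I: "int_mat g'"
  shows "int (2*d) dvd ent g 1 0" "int (2*d) dvd ent g 2 0" "int (2*d) dvd ent g 3 0"
    "int (2*d) dvd ent g 4 0" "int d dvd 3 * ent g 5 0"
    "2*ent g 1 0*ent g 2 0 + 2*ent g 3 0*ent g 4 0 - 6*(ent g 5 0)^2 - 2*int d*(ent g 0 0)^2 = -2 * int d"
    "6 dvd ent g 1 5" "6 dvd ent g 2 5" "6 dvd ent g 3 5" "6 dvd ent g 4 5" "3 dvd int d * ent g 0 5"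
    "2*ent g 1 5*ent g 2 5 + 2*ent g 3 5*ent g 4 5 - 6*(ent g 5 5)^2 - 2*int d*(ent g 0 5)^2 = -6"
proof -
  have gI: "int_mat g" using g unfolding OL_def by auto
  note E = ent_eq[OF gI] ent_eq[OF g'I]
  note T = OL_transfer[OF g gi]
  note N = OL_norm[OF g]
  have t: "\<And>a b. bilL d (g *v axis a 1) (axis b 1) = bilL d (axis a 1) (g' *v axis b 1)" by (rule T)
  have "real_of_int (ent g 2 0) = (-2 * real d) * real_of_int (ent g' 0 1)"
    using t[of 0 1] by (simp add: bilL_eq mv_axis axis6 E)
  then have "ent g 2 0 = (- int (2*d)) * ent g' 0 1" by (rule ri) simp
  then show "int (2*d) dvd ent g 2 0" by simp
  have "real_of_int (ent g 1 0) = (-2 * real d) * real_of_int (ent g' 0 2)"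
    using t[of 0 2] by (simp add: bilL_eq mv_axis axis6 E)
  then have "ent g 1 0 = (- int (2*d)) * ent g' 0 2" by (rule ri) simp
  then show "int (2*d) dvd ent g 1 0" by simp
  have "real_of_int (ent g 4 0) = (-2 * real d) * real_of_int (ent g' 0 3)"
    using t[of 0 3] by (simp add: bilL_eq mv_axis axis6 E)
  then have "ent g 4 0 = (- int (2*d)) * ent g' 0 3" by (rule ri) simp
  then show "int (2*d) dvd ent g 4 0" by simp
  have "real_of_int (ent g 3 0) = (-2 * real d) * real_of_int (ent g' 0 4)"
    using t[of 0 4] by (simp add: bilL_eq mv_axis axis6 E)
  then have "ent g 3 0 = (- int (2*d)) * ent g' 0 4" by (rule ri) simp
  then show "int (2*d) dvd ent g 3 0" by simp
  have "real_of_int (3 * ent g 5 0) = (real d) * real_of_int (ent g' 0 5)"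
    using t[of 0 5] by (simp add: bilL_eq mv_axis axis6 E)
  then have "3 * ent g 5 0 = (int d) * ent g' 0 5" by (rule ri) simp
  then show "int d dvd 3 * ent g 5 0" by simp
  have "real_of_int (ent g 2 5) = (-6) * real_of_int (ent g' 5 1)"
    using t[of 5 1] by (simp add: bilL_eq mv_axis axis6 E)
  then have "ent g 2 5 = (-6) * ent g' 5 1" by (rule ri) simp
  then show "6 dvd ent g 2 5" by simp
  have "real_of_int (ent g 1 5) = (-6) * real_of_int (ent g' 5 2)"
    using t[of 5 2] by (simp add: bilL_eq mv_axis axis6 E)
  then have "ent g 1 5 = (-6) * ent g' 5 2" by (rule ri) simp
  then show "6 dvd ent g 1 5" by simp
  have "real_of_int (ent g 4 5) = (-6) * real_of_int (ent g' 5 3)"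
    using t[of 5 3] by (simp add: bilL_eq mv_axis axis6 E)
  then have "ent g 4 5 = (-6) * ent g' 5 3" by (rule ri) simp
  then show "6 dvd ent g 4 5" by simp
  have "real_of_int (ent g 3 5) = (-6) * real_of_int (ent g' 5 4)"
    using t[of 5 4] by (simp add: bilL_eq mv_axis axis6 E)
  then have "ent g 3 5 = (-6) * ent g' 5 4" by (rule ri) simp
  then show "6 dvd ent g 3 5" by simp
  have "real_of_int (int d * ent g 0 5) = 3 * real_of_int (ent g' 5 0)"
    using t[of 5 0] by (simp add: bilL_eq mv_axis axis6 E)
  then have "int d * ent g 0 5 = 3 * ent g' 5 0" by (rule ri) simp
  then show "3 dvd int d * ent g 0 5" by simp
  have "real_of_int (2*ent g 1 0*ent g 2 0 + 2*ent g 3 0*ent g 4 0 - 6*(ent g 5 0)^2 - 2*int d*(ent g 0 0)^2)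
      = real_of_int (-2 * int d)"
    using N[of 0] by (simp add: bilL_eq mv_axis axis6 E power2_eq_square algebra_simps)
  then show "2*ent g 1 0*ent g 2 0 + 2*ent g 3 0*ent g 4 0 - 6*(ent g 5 0)^2 - 2*int d*(ent g 0 0)^2 = -2 * int d"
    by (simp only: of_int_eq_iff)
  have "real_of_int (2*ent g 1 5*ent g 2 5 + 2*ent g 3 5*ent g 4 5 - 6*(ent g 5 5)^2 - 2*int d*(ent g 0 5)^2)
      = real_of_int (-6)"
    using N[of 5] by (simp add: bilL_eq mv_axis axis6 E power2_eq_square algebra_simps)
  then show "2*ent g 1 5*ent g 2 5 + 2*ent g 3 5*ent g 4 5 - 6*(ent g 5 5)^2 - 2*int d*(ent g 0 5)^2 = -6"
    by (simp only: of_int_eq_iff)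
qed




lemma u_core:
  fixes u0 u1 u2 u3 u4 u5 :: int and d :: nat
  assumes d: "d > 0" and h1: "int (2*d) dvd u1" and h2: "int (2*d) dvd u2"
    and h3: "int (2*d) dvd u3" and h4: "int (2*d) dvd u4" and h5: "int d dvd 3 * u5"
    and Q: "2*u1*u2 + 2*u3*u4 - 6*u5^2 - 2*int d*u0^2 = -2 * int d"
  shows "3 * u5 = int d * (3 * u5 div int d)"
    "\<exists>K. int d * (3 * u5 div int d)^2 + 3 * (u0^2 - 1) = 12 * int d * K"
proof -
  show e: "3 * u5 = int d * (3 * u5 div int d)" using h5 by simp
  define al where "al = 3 * u5 div int d"
  have e': "3 * u5 = int d * al" using e unfolding al_def .
  obtain a1 a2 a3 a4 where a: "u1 = 2 * int d * a1" "u2 = 2 * int d * a2" "u3 = 2 * int d * a3" "u4 = 2 * int d * a4"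
    using h1 h2 h3 h4 by (auto elim!: dvdE)
  define K where "K = a1 * a2 + a3 * a4"
  have six: "6 * u5^2 = 2 * u5 * (int d * al)" using e' by (simp add: power2_eq_square algebra_simps)
  have "2 * int d * (u5 * al + u0^2 - 1 - 4 * int d * K) = 0"
    using Q unfolding a six K_def by (simp add: algebra_simps power2_eq_square)
  then have "u5 * al + u0^2 - 1 = 4 * int d * K" using d by simp
  then have "3 * (u5 * al) + 3 * (u0^2 - 1) = 12 * int d * K" by (simp add: algebra_simps)
  moreover have "3 * (u5 * al) = int d * al^2" using e' by (simp add: power2_eq_square algebra_simps)
  ultimately show "\<exists>K. int d * (3 * u5 div int d)^2 + 3 * (u0^2 - 1) = 12 * int d * K"
    unfolding al_def by auto
qed

lemma u_dvd3:
  assumes "int d * al^2 + 3 * (b^2 - 1) = 12 * int d * K"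
  shows "int d dvd 3 * (b^2 - 1)"
proof -
  have "3 * (b^2 - 1) = int d * (12 * K - al^2)" using assms by (simp add: algebra_simps)
  then show ?thesis by simp
qed

lemma u_pair:
  fixes d :: nat and al al' b b' K K' :: int
  assumes d: "d > 0"
    and e1: "int d * al^2 + 3 * (b^2 - 1) = 12 * int d * K"
    and e2: "int d * al'^2 + 3 * (b'^2 - 1) = 12 * int d * K'"
    and bb: "int (2*d) dvd b - b'" and bit: "(al mod 6 < 3) = (al' mod 6 < 3)"
  shows "al mod 6 = al' mod 6"
proof -
  obtain k where k: "b - b' = 2 * int d * k" using bb by (auto elim!: dvdE)
  have bsq: "b^2 - b'^2 = 4 * int d * (k * (b' + int d * k))"
  proof -
    have "b = b' + 2 * int d * k" using k by simp
    then show ?thesis by (simp add: power2_eq_square algebra_simps)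
  qed
  have "int d * (al^2 - al'^2) = int d * (12 * (K - K' - k * (b' + int d * k)))"
    using e1 e2 bsq by (simp add: algebra_simps)
  then have "al^2 - al'^2 = 12 * (K - K' - k * (b' + int d * k))" using d by simp
  then have "12 dvd al^2 - al'^2" by simp
  then show ?thesis using sq12 bit by blast
qed

lemma u5_pair:
  fixes d :: nat and u5 u5' :: int
  assumes d: "d > 0" and e: "3 * u5 = int d * al" and e': "3 * u5' = int d * al'"
    and m: "al mod 6 = al' mod 6"
  shows "int (2*d) dvd u5 - u5'"
proof -
  have "6 dvd al - al'" using m by (simp add: mod_eq_dvd_iff)
  then obtain j where j: "al - al' = 6 * j" by (auto elim!: dvdE)
  have "3 * (u5 - u5') = 3 * (2 * int d * j)" using e e' j by (simp add: algebra_simps)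
  then have "u5 - u5' = 2 * int d * j" by simp
  then show ?thesis by simp
qed

lemma t_core:
  fixes t0 t1 t2 t3 t4 t5 :: int and d :: nat
  assumes h1: "6 dvd t1" and h2: "6 dvd t2" and h3: "6 dvd t3" and h4: "6 dvd t4"
    and Q: "2*t1*t2 + 2*t3*t4 - 6*t5^2 - 2*int d*t0^2 = -6"
  shows "\<exists>K. 3 * t5^2 + int d * t0^2 - 3 = 36 * K"
proof -
  obtain a1 a2 a3 a4 where a: "t1 = 6 * a1" "t2 = 6 * a2" "t3 = 6 * a3" "t4 = 6 * a4"
    using h1 h2 h3 h4 by (auto elim!: dvdE)
  have "3 * t5^2 + int d * t0^2 - 3 = 36 * (a1 * a2 + a3 * a4)"
    using Q unfolding a by (simp add: algebra_simps)
  then show ?thesis by blast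
qed

lemma t_sign:
  fixes e t0 t5 :: int
  assumes "e = 1 \<or> e = -1" "3 * t5^2 + int d * t0^2 - 3 = 36 * K" "3 dvd int d * t0"
  shows "3 * (e * t5)^2 + int d * (e * t0)^2 - 3 = 36 * K" "3 dvd int d * (e * t0)"
  using assms by (auto simp: power2_eq_square)

lemma t_pair:
  fixes d :: nat and s0 s0' s5 s5' K K' :: int
  assumes e1: "3 * s5^2 + int d * s0^2 - 3 = 36 * K"
    and e2: "3 * s5'^2 + int d * s0'^2 - 3 = 36 * K'"
    and c1: "3 dvd int d * s0" and c2: "3 dvd int d * s0'"
    and m0: "s0 mod 6 = s0' mod 6" and bit: "(s5 mod 6 < 3) = (s5' mod 6 < 3)"
  shows "s5 mod 6 = s5' mod 6"
proof -
  have "6 dvd s0 - s0'" using m0 by (simp add: mod_eq_dvd_iff)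
  then obtain k where k: "s0 - s0' = 6 * k" by (auto elim!: dvdE)
  have s0: "s0 = s0' + 6 * k" using k by simp
  have "3 dvd int d * s0 + int d * s0'" using c1 c2 by simp
  then have "3 dvd 2 * (int d * (s0' + 3 * k))" unfolding s0 by (simp add: algebra_simps)
  then have "3 dvd int d * (s0' + 3 * k)"
  proof -
    have "coprime (3::int) 2" by simp
    then show ?thesis using \<open>3 dvd 2 * (int d * (s0' + 3 * k))\<close> coprime_dvd_mult_right_iff by blast
  qed
  then obtain m where m: "int d * (s0' + 3 * k) = 3 * m" by (auto elim!: dvdE)
  have "int d * (s0^2 - s0'^2) = 36 * (k * m)"
  proof -
    have "int d * (s0^2 - s0'^2) = 12 * k * (int d * (s0' + 3 * k))"
      unfolding s0 by (simp add: power2_eq_square algebra_simps)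
    then show ?thesis unfolding m by simp
  qed
  then have "3 * (s5^2 - s5'^2) = 3 * (12 * (K - K' - k * m))"
    using e1 e2 by (simp add: algebra_simps)
  then have "s5^2 - s5'^2 = 12 * (K - K' - k * m)" by simp
  then have "12 dvd s5^2 - s5'^2" by simp
  then show ?thesis using sq12 bit by blast
qed




lemma blk:
  fixes d :: nat and b b' :: int
  assumes d: "d > 0" and dv: "int d dvd 6 * (b - b')"
    and q: "(6 * b) mod (12 * int d) div int d = (6 * b') mod (12 * int d) div int d"
  shows "int (2 * d) dvd b - b'"
proof -
  define X where "X = (6 * b) mod (12 * int d)"
  define X' where "X' = (6 * b') mod (12 * int d)"
  have x1: "X = 6 * b - (12 * int d) * ((6 * b) div (12 * int d))"
    unfolding X_def by (rule minus_mult_div_eq_mod[symmetric])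
  have x2: "X' = 6 * b' - (12 * int d) * ((6 * b') div (12 * int d))"
    unfolding X'_def by (rule minus_mult_div_eq_mod[symmetric])
  have "X - X' = 6 * (b - b') - int d * (12 * ((6 * b) div (12 * int d) - (6 * b') div (12 * int d)))"
    unfolding x1 x2 by (simp add: algebra_simps)
  moreover have "int d dvd 6 * (b - b') - int d * (12 * ((6 * b) div (12 * int d) - (6 * b') div (12 * int d)))"
    using dv by (rule dvd_diff) simp
  ultimately have "int d dvd X - X'" by simp
  then have "X mod int d = X' mod int d" by (simp add: mod_eq_dvd_iff)
  moreover have "X div int d = X' div int d" using q unfolding X_def X'_def .
  ultimately have "X = X'" by (metis div_mult_mod_eq)
  then have "12 * int d dvd 6 * b - 6 * b'" unfolding X_def X'_def by (simp add: mod_eq_dvd_iff)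
  then obtain j where "6 * b - 6 * b' = 12 * int d * j" by (auto elim!: dvdE)
  then have "b - b' = 2 * int d * j" by simp
  then show ?thesis by simp
qed

lemma blk_range:
  fixes d :: nat and b :: int
  assumes d: "d > 0"
  shows "(6 * b) mod (12 * int d) div int d \<in> {0..<12}"
proof -
  define X where "X = (6 * b) mod (12 * int d)"
  have "0 \<le> X" "X < 12 * int d" unfolding X_def using d by simp_all
  have "0 \<le> X div int d" using \<open>0 \<le> X\<close> d by (simp add: pos_imp_zdiv_nonneg_iff)
  moreover have "X div int d < 12"
  proof (rule ccontr)
    assume "\<not> X div int d < 12"
    then have "int d * 12 \<le> int d * (X div int d)" using d by (intro mult_left_mono) auto
    moreover have "int d * (X div int d) \<le> X"
    proof -
      have "X = int d * (X div int d) + X mod int d" by simp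
      moreover have "0 \<le> X mod int d" using d by simp
      ultimately show ?thesis by linarith
    qed
    ultimately show False using \<open>X < 12 * int d\<close> by simp
  qed
  ultimately have "0 \<le> X div int d" "X div int d < 12" by simp_all
  then show ?thesis unfolding X_def by simp
qed




definition epsd :: "real^6^6 \<Rightarrow> int" where "epsd g = \<lfloor>det g\<rfloor>"

lemma epsd: assumes "g \<in> OL d" shows "epsd g = 1 \<or> epsd g = -1" "det g = of_int (epsd g)"
proof -
  have m: "\<lfloor>(-1::real)\<rfloor> = -1" using floor_of_int[of "-1"] by simp
  show "epsd g = 1 \<or> epsd g = -1" "det g = of_int (epsd g)"
    using OL_det[OF assms] m unfolding epsd_def by auto
qed

definition alp :: "nat \<Rightarrow> real^6^6 \<Rightarrow> int" where "alp d g = 3 * ent g 5 0 div int d"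

definition Dat :: "nat \<Rightarrow> real^6^6 \<Rightarrow> bool \<times> nat set \<times> int \<times> bool \<times> int \<times> bool" where
  "Dat d g = (g \<in> spinor_kernel d, Sset d (ent g 0 0), (6 * ent g 0 0) mod (12 * int d) div int d,
     alp d g mod 6 < 3, (epsd g * ent g 0 5) mod 6, (epsd g * ent g 5 5) mod 6 < 3)"

definition Box :: "nat \<Rightarrow> (bool \<times> nat set \<times> int \<times> bool \<times> int \<times> bool) set" where
  "Box d = UNIV \<times> Pow (prime_factors d) \<times> {0..<12} \<times> UNIV \<times> {0..<6} \<times> UNIV"

lemma Box_card: "finite (Box d) \<and> card (Box d) = 576 * 2 ^ card (prime_factors d)"
  unfolding Box_def by (simp add: card_cartesian_product card_Pow)

lemma Dat_Box: "d > 0 \<Longrightarrow> Dat d g \<in> Box d"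
  unfolding Dat_def Box_def using blk_range[of d "ent g 0 0"] Sset_sub[of d "ent g 0 0"] by auto

lemma g_facts:
  assumes g: "g \<in> OL d" and d: "d > 0"
  shows "int d dvd 3 * ((ent g 0 0)^2 - 1)"
    "\<exists>K. int d * (alp d g)^2 + 3 * ((ent g 0 0)^2 - 1) = 12 * int d * K"
    "3 * ent g 5 0 = int d * alp d g"
    "\<exists>K. 3 * (epsd g * ent g 5 5)^2 + int d * (epsd g * ent g 0 5)^2 - 3 = 36 * K"
    "3 dvd int d * (epsd g * ent g 0 5)"
    "\<forall>i\<in>{1,2,3,4}. int (2*d) dvd ent g i 0"
    "\<forall>i\<in>{1,2,3,4}. 6 dvd epsd g * ent g i 5"
proof -
  obtain g' where g': "g' \<in> OL d" "g ** g' = mat 1" "g' ** g = mat 1" using OL_inv[OF g] by blast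
  have g'I: "int_mat g'" using g' unfolding OL_def by auto
  note C = col_facts[OF g g'(2) g'I]
  note U = u_core[OF d C(1-6)]
  show "\<exists>K. int d * (alp d g)^2 + 3 * ((ent g 0 0)^2 - 1) = 12 * int d * K"
    using U(2) unfolding alp_def .
  then show "int d dvd 3 * ((ent g 0 0)^2 - 1)" using u_dvd3 by blast
  show "3 * ent g 5 0 = int d * alp d g" using U(1) unfolding alp_def .
  obtain K where K: "3 * (ent g 5 5)^2 + int d * (ent g 0 5)^2 - 3 = 36 * K" using t_core[OF C(7-10,12)] by blast
  note S = t_sign[OF epsd(1)[OF g] K C(11)]
  show "\<exists>K. 3 * (epsd g * ent g 5 5)^2 + int d * (epsd g * ent g 0 5)^2 - 3 = 36 * K" using S(1) by blast
  show "3 dvd int d * (epsd g * ent g 0 5)" using S(2) .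
  show "\<forall>i\<in>{1,2,3,4}. int (2*d) dvd ent g i 0" using C(1-4) by auto
  show "\<forall>i\<in>{1,2,3,4}. 6 dvd epsd g * ent g i 5" using C(7-10) by auto
qed

lemma congr:
  assumes g: "g \<in> OL d" and h: "h \<in> OL d" and d: "d > 0" and D: "Dat d g = Dat d h"
  shows "\<forall>i. int (2*d) dvd 1 * ent h i 0 - 1 * ent g i 0"
    "\<forall>i. 6 dvd epsd h * ent h i 5 - epsd g * ent g i 5"
proof -
  note G = g_facts[OF g d] and H = g_facts[OF h d]
  have D1: "Sset d (ent g 0 0) = Sset d (ent h 0 0)"
    "(6 * ent g 0 0) mod (12 * int d) div int d = (6 * ent h 0 0) mod (12 * int d) div int d"
    "(alp d g mod 6 < 3) = (alp d h mod 6 < 3)"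
    "(epsd g * ent g 0 5) mod 6 = (epsd h * ent h 0 5) mod 6"
    "((epsd g * ent g 5 5) mod 6 < 3) = ((epsd h * ent h 5 5) mod 6 < 3)"
    using D unfolding Dat_def by auto
  have "int d dvd 6 * (ent g 0 0 - ent h 0 0)" using roots_S[OF d G(1) H(1) D1(1)] .
  then have b: "int (2*d) dvd ent g 0 0 - ent h 0 0" using blk[OF d _ D1(2)] by blast
  obtain K where K: "int d * (alp d g)^2 + 3 * ((ent g 0 0)^2 - 1) = 12 * int d * K" using G(2) by blast
  obtain K' where K': "int d * (alp d h)^2 + 3 * ((ent h 0 0)^2 - 1) = 12 * int d * K'" using H(2) by blast
  have "alp d g mod 6 = alp d h mod 6" using u_pair[OF d K K' b D1(3)] .
  then have u5: "int (2*d) dvd ent g 5 0 - ent h 5 0" using u5_pair[OF d G(3) H(3)] by blast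
  obtain L where L: "3 * (epsd g * ent g 5 5)^2 + int d * (epsd g * ent g 0 5)^2 - 3 = 36 * L" using G(4) by blast
  obtain L' where L': "3 * (epsd h * ent h 5 5)^2 + int d * (epsd h * ent h 0 5)^2 - 3 = 36 * L'" using H(4) by blast
  have t5: "(epsd g * ent g 5 5) mod 6 = (epsd h * ent h 5 5) mod 6"
    using t_pair[OF L L' G(5) H(5) D1(4) D1(5)] .
  have z: "int (2*d) dvd ent h i 0 - ent g i 0" for i
  proof -
    have "i = 0 \<or> i = 1 \<or> i = 2 \<or> i = 3 \<or> i = 4 \<or> i = 5" by (rule exhaust_6)
    then show ?thesis
    proof (elim disjE)
      assume "i = 0" then show ?thesis using b by (metis dvd_minus_iff minus_diff_eq)
    next
      assume "i = 5" then show ?thesis using u5 by (metis dvd_minus_iff minus_diff_eq)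
    qed (use G(6) H(6) in \<open>auto intro: dvd_diff\<close>)
  qed
  then show "\<forall>i. int (2*d) dvd 1 * ent h i 0 - 1 * ent g i 0" by simp
  have "6 dvd epsd h * ent h i 5 - epsd g * ent g i 5" for i
  proof -
    have "i = 0 \<or> i = 1 \<or> i = 2 \<or> i = 3 \<or> i = 4 \<or> i = 5" by (rule exhaust_6)
    then show ?thesis
    proof (elim disjE)
      assume "i = 0" then show ?thesis using D1(4)[symmetric] by (simp add: mod_eq_dvd_iff)
    next
      assume "i = 5" then show ?thesis using t5[symmetric] by (simp add: mod_eq_dvd_iff)
    qed (use G(7) H(7) in \<open>auto intro: dvd_diff\<close>)
  qed
  then show "\<forall>i. 6 dvd epsd h * ent h i 5 - epsd g * ent g i 5" by simp
qed




lemma int_vec_frac: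
  fixes n :: nat and a b :: int
  assumes n: "n > 0" and gI: "int_mat g" and hI: "int_mat h"
    and dv: "\<forall>i. int n dvd a * ent h i j - b * ent g i j"
  shows "int_vec ((1 / real n) *\<^sub>R (of_int a *\<^sub>R (h *v axis j 1) - of_int b *\<^sub>R (g *v axis j 1)))"
  unfolding int_vec_def
proof
  fix i
  obtain z where z: "a * ent h i j - b * ent g i j = int n * z" using dv by (auto elim!: dvdE)
  have "((1 / real n) *\<^sub>R (of_int a *\<^sub>R (h *v axis j 1) - of_int b *\<^sub>R (g *v axis j 1))) $ i
      = (of_int (a * ent h i j - b * ent g i j)) / real n"
    by (simp add: mv_axis ent_eq[OF gI] ent_eq[OF hI])
  also have "\<dots> = of_int z" unfolding z using n by simp
  finally show "((1 / real n) *\<^sub>R (of_int a *\<^sub>R (h *v axis j 1) - of_int b *\<^sub>R (g *v axis j 1))) $ i \<in> \<int>"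
    by simp
qed

lemma v_ident:
  fixes g g' h :: "real^6^6" and v :: "real^6"
  assumes "g' ** g = mat 1"
  shows "(g' ** h) *v (c *\<^sub>R v) - c *\<^sub>R v = g' *v (c *\<^sub>R (of_int 1 *\<^sub>R (h *v v) - of_int 1 *\<^sub>R (g *v v)))"
proof -
  have "g' *v (c *\<^sub>R (of_int 1 *\<^sub>R (h *v v) - of_int 1 *\<^sub>R (g *v v))) = c *\<^sub>R ((g' ** h) *v v) - c *\<^sub>R ((g' ** g) *v v)"
    by (simp only: of_int_1 scaleR_one scaleR_diff_right matrix_vector_mult_diff_distrib matrix_vector_mult_scaleR matrix_vector_mul_assoc)
  also have "\<dots> = (g' ** h) *v (c *\<^sub>R v) - c *\<^sub>R v"
    using assms by (simp only: matrix_vector_mult_scaleR matrix_vector_mul_lid)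
  finally show ?thesis by simp
qed

lemma w_ident:
  fixes g g' h :: "real^6^6" and v :: "real^6"
  assumes gi: "g' ** g = mat 1" and eg: "eg = 1 \<or> eg = -1" and eh: "eh = 1 \<or> eh = -1"
  shows "(g' ** h) *v (c *\<^sub>R v) - (of_int eg * of_int eh) *\<^sub>R (c *\<^sub>R v)
     = of_int eh *\<^sub>R (g' *v (c *\<^sub>R (of_int eh *\<^sub>R (h *v v) - of_int eg *\<^sub>R (g *v v))))"
proof -
  define P where "P = (g' ** h) *v v"
  have "g' *v (c *\<^sub>R (of_int eh *\<^sub>R (h *v v) - of_int eg *\<^sub>R (g *v v)))
     = c *\<^sub>R (of_int eh *\<^sub>R ((g' ** h) *v v)) - c *\<^sub>R (of_int eg *\<^sub>R ((g' ** g) *v v))"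
    by (simp only: scaleR_diff_right matrix_vector_mult_diff_distrib matrix_vector_mult_scaleR matrix_vector_mul_assoc)
  also have "\<dots> = c *\<^sub>R (of_int eh *\<^sub>R P) - c *\<^sub>R (of_int eg *\<^sub>R v)"
    unfolding P_def using gi by (simp only: matrix_vector_mul_lid)
  finally have e: "g' *v (c *\<^sub>R (of_int eh *\<^sub>R (h *v v) - of_int eg *\<^sub>R (g *v v)))
     = c *\<^sub>R (of_int eh *\<^sub>R P) - c *\<^sub>R (of_int eg *\<^sub>R v)" .
  have e2: "(g' ** h) *v (c *\<^sub>R v) = c *\<^sub>R P" unfolding P_def by (simp only: matrix_vector_mult_scaleR)
  show ?thesis unfolding e e2 using eg eh by (auto simp: algebra_simps)
qed

lemma det_inv: assumes "g' ** g = mat 1" "g \<in> OL d" shows "det g' = det g"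
proof -
  have "det g' * det g = 1" using assms(1) by (metis det_mul det_I)
  then show ?thesis using OL_det[OF assms(2)] by auto
qed

lemma key:
  assumes g: "g \<in> OL d" and h: "h \<in> OL d" and d: "d > 0" and D: "Dat d g = Dat d h"
    and g': "g' \<in> OL d" "g' ** g = mat 1"
  shows "g' ** h \<in> GammaL d"
proof -
  have gI: "int_mat g" and hI: "int_mat h" and g'I: "int_mat g'" using g h g' unfolding OL_def by auto
  note C = congr[OF g h d D]
  have sp: "g' ** h \<in> spinor_kernel d"
    using spin_key[OF g h g'(2) d] D unfolding Dat_def by auto
  have ol: "g' ** h \<in> OL d" using OL_mul[OF g'(1) h] .
  have v: "int_vec ((g' ** h) *v ((1 / (2 * real d)) *\<^sub>R vecL) - (1 / (2 * real d)) *\<^sub>R vecL)"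
  proof -
    have "int_vec ((1 / real (2*d)) *\<^sub>R (of_int 1 *\<^sub>R (h *v axis 0 1) - of_int 1 *\<^sub>R (g *v axis 0 1)))"
      using int_vec_frac[OF _ gI hI C(1)] d by simp
    then have "int_vec (g' *v ((1 / (2 * real d)) *\<^sub>R (of_int 1 *\<^sub>R (h *v vecL) - of_int 1 *\<^sub>R (g *v vecL))))"
      unfolding vecL_def by (intro int_vec_mat[OF g'I]) simp
    then show ?thesis using v_ident[OF g'(2)] by metis
  qed
  have w: "int_vec ((g' ** h) *v ((1 / 6) *\<^sub>R vecW) - (det (g' ** h)) *\<^sub>R ((1 / 6) *\<^sub>R vecW))"
  proof -
    have "int_vec ((1 / real (6::nat)) *\<^sub>R (of_int (epsd h) *\<^sub>R (h *v axis 5 1) - of_int (epsd g) *\<^sub>R (g *v axis 5 1)))"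
      by (rule int_vec_frac[OF _ gI hI]) (use C(2) in simp_all)
    then have i6: "int_vec ((1 / 6) *\<^sub>R (of_int (epsd h) *\<^sub>R (h *v axis 5 1) - of_int (epsd g) *\<^sub>R (g *v axis 5 1)))"
      by simp
    have "int_vec (of_int (epsd h) *\<^sub>R (g' *v ((1 / 6) *\<^sub>R (of_int (epsd h) *\<^sub>R (h *v vecW) - of_int (epsd g) *\<^sub>R (g *v vecW)))))"
      unfolding vecW_def by (rule int_vec_scale[OF _ int_vec_mat[OF g'I i6]]) simp
    moreover have "det (g' ** h) = of_int (epsd g) * of_int (epsd h)"
      using det_inv[OF g'(2) g] epsd(2)[OF g] epsd(2)[OF h] by (simp add: det_mul)
    ultimately show ?thesis using w_ident[OF g'(2) epsd(1)[OF g] epsd(1)[OF h]] by metis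
  qed
  show ?thesis unfolding GammaL_def OplusL_def using sp ol v w by auto
qed

lemma gamma_mul:
  assumes a: "a \<in> GammaL d" and b: "b \<in> GammaL d"
  shows "a ** b \<in> GammaL d"
proof -
  have aO: "a \<in> OL d" "a \<in> spinor_kernel d" and bO: "b \<in> OL d" "b \<in> spinor_kernel d"
    using a b unfolding GammaL_def OplusL_def by auto
  have aI: "int_mat a" using aO unfolding OL_def by auto
  define y where "y = (1 / (2 * real d)) *\<^sub>R vecL"
  define w where "w = (1 / 6) *\<^sub>R vecW"
  have av: "int_vec (a *v y - y)" "int_vec (a *v w - det a *\<^sub>R w)"
    using a unfolding GammaL_def y_def w_def by auto
  have bv: "int_vec (b *v y - y)" "int_vec (b *v w - det b *\<^sub>R w)"
    using b unfolding GammaL_def y_def w_def by auto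
  have e1: "(a ** b) *v y - y = a *v (b *v y - y) + (a *v y - y)"
    by (simp add: matrix_vector_mult_diff_distrib matrix_vector_mul_assoc)
  have e2: "(a ** b) *v w - det (a ** b) *\<^sub>R w = a *v (b *v w - det b *\<^sub>R w) + det b *\<^sub>R (a *v w - det a *\<^sub>R w)"
    by (simp add: matrix_vector_mult_diff_distrib matrix_vector_mul_assoc matrix_vector_mult_scaleR det_mul
        scaleR_diff_right algebra_simps)
  have dI: "det b \<in> \<int>" using bO unfolding OL_def by (auto intro: int_mat_det)
  have "int_vec ((a ** b) *v y - y)" unfolding e1 using av bv aI by (intro int_vec_add int_vec_mat)
  moreover have "int_vec ((a ** b) *v w - det (a ** b) *\<^sub>R w)" unfolding e2 using av bv aI dI
    by (intro int_vec_add int_vec_mat int_vec_scale)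
  moreover have "a ** b \<in> OplusL d" unfolding OplusL_def using OL_mul[OF aO(1) bO(1)] spin_mul[OF aO(2) bO(2)] by auto
  ultimately show ?thesis unfolding GammaL_def y_def w_def by auto
qed

lemma coset_sub:
  assumes g: "g \<in> OL d" and h: "h \<in> OL d" and d: "d > 0" and D: "Dat d g = Dat d h"
  shows "(\<lambda>x. g ** x) ` GammaL d \<subseteq> (\<lambda>x. h ** x) ` GammaL d"
proof
  fix z assume "z \<in> (\<lambda>x. g ** x) ` GammaL d"
  then obtain x where x: "x \<in> GammaL d" "z = g ** x" by auto
  obtain h' where h': "h' \<in> OL d" "h ** h' = mat 1" "h' ** h = mat 1" using OL_inv[OF h] by blast
  have k: "h' ** g \<in> GammaL d" using key[OF h g d D[symmetric] h'(1) h'(3)] .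
  have "z = h ** ((h' ** g) ** x)" using x(2) h'(2) by (simp add: matrix_mul_assoc)
  moreover have "(h' ** g) ** x \<in> GammaL d" using gamma_mul[OF k x(1)] .
  ultimately show "z \<in> (\<lambda>x. h ** x) ` GammaL d" by blast
qed

lemma pf_mono: "(d::nat) > 0 \<Longrightarrow> card (prime_factors d) \<le> card (prime_factors (2 * d))"
  by (intro card_mono) (auto simp: in_prime_factors_iff)

theorem lemma2p4:
  fixes d :: nat
  assumes "d \<ge> 48"
  shows "finite (mat_cosets (OL d) (GammaL d))
       \<and> card (mat_cosets (OL d) (GammaL d)) \<le> 2880 * 2 ^ card (prime_factors (2 * d))"
proof -
  have d: "d > 0" using assms by simp
  define cs :: "real^6^6 \<Rightarrow> (real^6^6) set" where "cs = (\<lambda>g. (\<lambda>x. g ** x) ` GammaL d)"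
  define F where "F = (\<lambda>t. cs (SOME g. g \<in> OL d \<and> Dat d g = t))"
  have eq: "mat_cosets (OL d) (GammaL d) = F ` (Dat d ` OL d)"
  proof -
    have "cs g = F (Dat d g)" if g: "g \<in> OL d" for g
    proof -
      define g0 where "g0 = (SOME g0. g0 \<in> OL d \<and> Dat d g0 = Dat d g)"
      have g0: "g0 \<in> OL d \<and> Dat d g0 = Dat d g" unfolding g0_def by (rule someI[of _ g]) (use g in auto)
      have "cs g = cs g0" unfolding cs_def
        using coset_sub[OF g _ d] coset_sub[OF _ g d] g0 by (metis subset_antisym)
      then show ?thesis unfolding F_def g0_def by simp
    qed
    then have "cs ` OL d = F ` (Dat d ` OL d)" by (simp add: image_image cong: image_cong)
    moreover have "mat_cosets (OL d) (GammaL d) = cs ` OL d" unfolding mat_cosets_def cs_def by auto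
    ultimately show ?thesis by simp
  qed
  have sub: "Dat d ` OL d \<subseteq> Box d" using Dat_Box[OF d] by auto
  have fin: "finite (Dat d ` OL d)" using Box_card finite_subset[OF sub] by blast
  have "card (mat_cosets (OL d) (GammaL d)) \<le> card (Dat d ` OL d)" unfolding eq by (rule card_image_le[OF fin])
  also have "\<dots> \<le> card (Box d)" using sub Box_card by (intro card_mono) auto
  also have "\<dots> = 576 * 2 ^ card (prime_factors d)" using Box_card by simp
  also have "\<dots> \<le> 2880 * 2 ^ card (prime_factors (2 * d))"
  proof -
    have "(2::nat) ^ card (prime_factors d) \<le> 2 ^ card (prime_factors (2 * d))"
      using pf_mono[OF d] by (intro power_increasing) auto
    then show ?thesis by linarith
  qed
  finally show ?thesis unfolding eq using fin by auto
qed


end
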